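(* Under the standing assumptions below, let $i\in P$ with $M_i\neq 0$. Then there exists $w\in P$ with $w\le i$ such that $D_w\subsetneq M_w$, i.e. $M_w$ contains an indecomposable element.
   Context: Standing assumptions: $R$ is a principal ideal domain; $P$ is a lattice with a compatible abelian group structure ($(P,+,0)$ abelian group, $a\le b\Rightarrow a+c\le b+c$). $U_0=\{s\in P:s\ge 0\}$, $R[U_0]$ the monoid ring (finite sums $\sum c_st^s$, $c_s\in R$), graded by $\deg(ct^s)=s$. $M=\bigoplus_{a\in P}M_a$ is a $P$-graded $R[U_0]$-module (persistence module) that is graded projective, with each $M_a$ a finitely generated $R$-module. For $r\in P$, $D_r=\sum_{q<r}t^{\,r-q}M_q\subseteq M_r$ (sum of the images of the structure maps $M_q\to M_r$ over all $q<r$). An element $x\in M_i$ is decomposable if $x\in D_i$ and indecomposable if $x\in M_i\setminus D_i$. *)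

theory Defs
  imports Main "HOL-Library.Lattice_Algebras"
begin

definition ring_ideal :: "'r::comm_ring_1 set \<Rightarrow> bool" where
  "ring_ideal I \<longleftrightarrow> 0 \<in> I \<and> (\<forall>x\<in>I. \<forall>y\<in>I. x + y \<in> I) \<and> (\<forall>x\<in>I. \<forall>r. r * x \<in> I)"

definition principal_ideal_domain :: "'r::idom itself \<Rightarrow> bool" where
  "principal_ideal_domain _ \<longleftrightarrow>
     (\<forall>I::'r set. ring_ideal I \<longrightarrow> (\<exists>a. I = {r * a | r. True}))"

text \<open>The ambient type 'm is the
  whole module M with R-module structure sc; act s is multiplication by the monomial
  t^s (only meaningful for s \<ge> 0); Mc a is the homogeneous component M_a.
  Since R[U_0] is the monoid ring of U_0 over R, an R[U_0]-module structure is the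
  same as an R-module together with an action of the monoid U_0 by R-linear maps.\<close>

definition graded_module ::
  "('r::comm_ring_1 \<Rightarrow> 'm::ab_group_add \<Rightarrow> 'm) \<Rightarrow> ('p::ordered_ab_group_add \<Rightarrow> 'm \<Rightarrow> 'm)
     \<Rightarrow> ('p \<Rightarrow> 'm set) \<Rightarrow> bool" where
  "graded_module sc act Mc \<longleftrightarrow>
     module sc
   \<and> (\<forall>s. 0 \<le> s \<longrightarrow> module_hom sc sc (act s))
   \<and> (\<forall>x. act 0 x = x)
   \<and> (\<forall>s t x. 0 \<le> s \<longrightarrow> 0 \<le> t \<longrightarrow> act s (act t x) = act (s + t) x)
   \<and> (\<forall>a. module.subspace sc (Mc a))
   \<and> (\<forall>a s. 0 \<le> s \<longrightarrow> act s ` Mc a \<subseteq> Mc (a + s))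
   \<and> module.span sc (\<Union>a. Mc a) = UNIV
   \<and> (\<forall>A x. finite A \<longrightarrow> (\<forall>a\<in>A. x a \<in> Mc a) \<longrightarrow> sum x A = 0 \<longrightarrow> (\<forall>a\<in>A. x a = 0))"

definition graded_hom ::
  "('r::comm_ring_1 \<Rightarrow> 'm::ab_group_add \<Rightarrow> 'm) \<Rightarrow> ('p::ordered_ab_group_add \<Rightarrow> 'm \<Rightarrow> 'm) \<Rightarrow> ('p \<Rightarrow> 'm set)
    \<Rightarrow> ('r \<Rightarrow> 'n::ab_group_add \<Rightarrow> 'n) \<Rightarrow> ('p \<Rightarrow> 'n \<Rightarrow> 'n) \<Rightarrow> ('p \<Rightarrow> 'n set)
    \<Rightarrow> ('m \<Rightarrow> 'n) \<Rightarrow> bool" where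
  "graded_hom sc1 act1 M1 sc2 act2 M2 g \<longleftrightarrow>
     module_hom sc1 sc2 g
   \<and> (\<forall>s x. 0 \<le> s \<longrightarrow> g (act1 s x) = act2 s (g x))
   \<and> (\<forall>a. g ` M1 a \<subseteq> M2 a)"

text \<open>Graded free R[U_0]-module: there is a set B of homogeneous elements
  (b of degree d b) which is an R[U_0]-basis, i.e. the elements t^s b
  (b \<in> B, s \<ge> 0), indexed injectively, form an R-basis.\<close>

definition graded_free ::
  "('r::comm_ring_1 \<Rightarrow> 'm::ab_group_add \<Rightarrow> 'm) \<Rightarrow> ('p::ordered_ab_group_add \<Rightarrow> 'm \<Rightarrow> 'm)
     \<Rightarrow> ('p \<Rightarrow> 'm set) \<Rightarrow> bool" where
  "graded_free sc act Mc \<longleftrightarrow> graded_module sc act Mc \<and>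
     (\<exists>B d. (\<forall>b\<in>B. b \<in> Mc (d b))
        \<and> inj_on (\<lambda>(b, s). act s b) {(b, s). b \<in> B \<and> 0 \<le> s}
        \<and> module.independent sc ((\<lambda>(b, s). act s b) ` {(b, s). b \<in> B \<and> 0 \<le> s})
        \<and> module.span sc ((\<lambda>(b, s). act s b) ` {(b, s). b \<in> B \<and> 0 \<le> s}) = UNIV)"

text \<open>Graded projective: a direct summand (in the category of graded R[U_0]-modules)
  of a graded free module, whose elements live in some type 'f.\<close>

definition graded_projective ::
  "'f::ab_group_add itself \<Rightarrow> ('r::comm_ring_1 \<Rightarrow> 'm::ab_group_add \<Rightarrow> 'm)
     \<Rightarrow> ('p::ordered_ab_group_add \<Rightarrow> 'm \<Rightarrow> 'm) \<Rightarrow> ('p \<Rightarrow> 'm set) \<Rightarrow> bool" where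
  "graded_projective _ sc act Mc \<longleftrightarrow> graded_module sc act Mc \<and>
     (\<exists>(scF :: 'r \<Rightarrow> 'f \<Rightarrow> 'f) actF Fc \<iota> \<pi>.
        graded_free scF actF Fc
      \<and> graded_hom sc act Mc scF actF Fc \<iota>
      \<and> graded_hom scF actF Fc sc act Mc \<pi>
      \<and> (\<forall>x. \<pi> (\<iota> x) = x))"

definition decomposable_part ::
  "('r::comm_ring_1 \<Rightarrow> 'm::ab_group_add \<Rightarrow> 'm) \<Rightarrow> ('p::ordered_ab_group_add \<Rightarrow> 'm \<Rightarrow> 'm)
     \<Rightarrow> ('p \<Rightarrow> 'm set) \<Rightarrow> 'p \<Rightarrow> 'm set" where
  "decomposable_part sc act Mc r = module.span sc (\<Union>q\<in>{q. q < r}. act (r - q) ` Mc q)"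

definition decomposable where
  "decomposable sc act Mc i x \<longleftrightarrow> x \<in> Mc i \<and> x \<in> decomposable_part sc act Mc i"

definition indecomposable where
  "indecomposable sc act Mc i x \<longleftrightarrow> x \<in> Mc i \<and> x \<notin> decomposable_part sc act Mc i"

end

theory Submission imports Defs begin

lemma graded_comp:
  fixes sc :: "'r::comm_ring_1 \<Rightarrow> 'm::ab_group_add \<Rightarrow> 'm"
    and act :: "'p::ordered_ab_group_add \<Rightarrow> 'm \<Rightarrow> 'm"
  assumes gm: "graded_module sc act Mc"
    and G: "\<forall>a\<in>G. a \<in> Mc (deg a)"
    and z: "z \<in> module.span sc G" and zq: "z \<in> Mc q"
  shows "z \<in> module.span sc {a\<in>G. deg a = q}"
proof -
  interpret m: module sc using gm by (simp add: graded_module_def)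
  have sub: "\<And>a. m.subspace (Mc a)" and ind: "\<And>A x. finite A \<Longrightarrow> (\<forall>a\<in>A. x a \<in> Mc a) \<Longrightarrow> sum x A = 0 \<Longrightarrow> (\<forall>a\<in>A. x a = 0)"
    using gm by (simp_all add: graded_module_def)
  obtain t c where t: "finite t" "t \<subseteq> G" and zt: "z = (\<Sum>a\<in>t. sc (c a) a)"
    using z unfolding m.span_explicit by blast
  define zp where "zp p = (\<Sum>a\<in>{a. a \<in> t \<and> deg a = p}. sc (c a) a)" for p
  define A where "A = insert q (deg ` t)"
  have fA: "finite A" using t by (simp add: A_def)
  have zpM: "zp p \<in> Mc p" for p
    unfolding zp_def
    by (rule m.subspace_sum[OF sub]) (use t G in \<open>auto intro: m.subspace_scale[OF sub]\<close>)
  have sumzp: "(\<Sum>p\<in>A. zp p) = z"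
    unfolding zp_def zt by (rule sum.group[OF t(1) fA]) (auto simp: A_def)
  define xx where "xx p = zp p - (if p = q then z else 0)" for p
  have "(\<Sum>p\<in>A. xx p) = 0"
    unfolding xx_def sum_subtractf sumzp using sum.delta[OF fA, of q "\<lambda>_. z"] by (simp add: A_def)
  moreover have "\<forall>p\<in>A. xx p \<in> Mc p"
    using zpM zq unfolding xx_def by (metis m.subspace_diff[OF sub] diff_zero)
  moreover have "q \<in> A" by (simp add: A_def)
  ultimately have "xx q = 0" using ind[OF fA, of xx] by blast
  hence "z = zp q" by (simp add: xx_def)
  also have "zp q \<in> m.span {a\<in>G. deg a = q}"
    unfolding zp_def by (rule m.span_sum, rule m.span_scale, rule m.span_base) (use t in auto)
  finally show ?thesis .
qed


theorem corollary3p12: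
  fixes sc :: "'r::idom \<Rightarrow> 'm::ab_group_add \<Rightarrow> 'm"
    and act :: "'p::lattice_ab_group_add \<Rightarrow> 'm \<Rightarrow> 'm"
    and M :: "'p \<Rightarrow> 'm set"
    and i :: 'p
  assumes "principal_ideal_domain TYPE('r)"
    and "graded_module sc act M"
    and "graded_projective TYPE('f::ab_group_add) sc act M"
    and "\<forall>a. \<exists>S. finite S \<and> S \<subseteq> M a \<and> module.span sc S = M a"
    and "M i \<noteq> {0}"
  shows "\<exists>w\<le>i. decomposable_part sc act M w \<subset> M w \<and> (\<exists>x. indecomposable sc act M w x)"
proof (rule ccontr)
  assume neg: "\<not> ?thesis"
  have gm: "graded_module sc act M" by fact
  interpret mM: module sc using gm by (simp add: graded_module_def)
  have subM: "\<And>a. mM.subspace (M a)" using gm by (simp add: graded_module_def)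
  have actM: "\<And>a s. 0 \<le> s \<Longrightarrow> act s ` M a \<subseteq> M (a + s)" using gm by (simp add: graded_module_def)
  have DsubM: "decomposable_part sc act M w \<subseteq> M w" for w
    unfolding decomposable_part_def
  proof (rule mM.span_minimal[OF _ subM], safe)
    fix q y assume "q < w" "y \<in> M q"
    hence "0 \<le> w - q" by simp
    with actM[OF this, of q] \<open>y \<in> M q\<close> show "act (w - q) y \<in> M w" by auto
  qed
  have MD: "M w \<subseteq> decomposable_part sc act M w" if "w \<le> i" for w
  proof
    fix x assume xM: "x \<in> M w"
    show "x \<in> decomposable_part sc act M w"
    proof (rule ccontr)
      assume "x \<notin> decomposable_part sc act M w"
      then have "decomposable_part sc act M w \<subset> M w" "indecomposable sc act M w x"
        using DsubM xM by (auto simp: indecomposable_def)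
      then show False using neg \<open>w \<le> i\<close> by blast
    qed
  qed
  from assms(3) obtain scF :: "'r \<Rightarrow> 'f \<Rightarrow> 'f" and actF Fc \<iota> \<pi> where
    fr: "graded_free scF actF Fc" and hi: "graded_hom sc act M scF actF Fc \<iota>"
    and hp: "graded_hom scF actF Fc sc act M \<pi>" and pi: "\<forall>x. \<pi> (\<iota> x) = x"
    unfolding graded_projective_def by blast
  have gF: "graded_module scF actF Fc" using fr by (simp add: graded_free_def)
  interpret mF: module scF using gF by (simp add: graded_module_def)
  from fr obtain B d where Bd: "\<forall>b\<in>B. b \<in> Fc (d b)"
    and inj: "inj_on (\<lambda>(b, s). actF s b) {(b, s). b \<in> B \<and> 0 \<le> s}"
    and indep: "mF.independent ((\<lambda>(b, s). actF s b) ` {(b, s). b \<in> B \<and> 0 \<le> s})"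
    and spanE: "mF.span ((\<lambda>(b, s). actF s b) ` {(b, s). b \<in> B \<and> 0 \<le> s}) = UNIV"
    unfolding graded_free_def by blast
  define Pairs where "Pairs = {(b, s::'p). b \<in> B \<and> 0 \<le> s}"
  define v where "v = (\<lambda>(b, s). actF s b)"
  define E where "E = v ` Pairs"
  define gi where "gi = the_inv_into Pairs v"
  have injP: "inj_on v Pairs" using inj by (simp add: v_def Pairs_def)
  have indE: "mF.independent E" using indep by (simp add: E_def v_def Pairs_def)
  have spanE': "mF.span E = UNIV" using spanE by (simp add: E_def v_def Pairs_def)
  have gi1: "gi (v k) = k" if "k \<in> Pairs" for k
    unfolding gi_def by (rule the_inv_into_f_f[OF injP that])
  have gi2: "gi e \<in> Pairs" "v (gi e) = e" if "e \<in> E" for e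
    using that unfolding gi_def E_def
    by (auto intro: the_inv_into_into[OF injP] f_the_inv_into_f[OF injP])
  have actF_hom: "module_hom scF scF (actF s)" if "0 \<le> s" for s
    using gF that by (simp add: graded_module_def)
  have actF_act: "actF s (actF t x) = actF (s + t) x" if "0 \<le> s" "0 \<le> t" for s t x
    using gF that by (simp add: graded_module_def)
  have actF_deg: "actF s ` Fc a \<subseteq> Fc (a + s)" if "0 \<le> s" for a s
    using gF that by (simp add: graded_module_def)
  have vdeg: "v k \<in> Fc (d (fst k) + snd k)" if "k \<in> Pairs" for k
    using that Bd actF_deg by (auto simp: v_def Pairs_def image_subset_iff)
  have L1: "z \<in> mF.span (v ` {k\<in>Pairs. d (fst k) + snd k = q})" if "z \<in> Fc q" for z q
  proof -
    define deg where "deg e = d (fst (gi e)) + snd (gi e)" for e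
    have "z \<in> mF.span {a\<in>E. deg a = q}"
      by (rule graded_comp[OF gF _ _ that]) (auto simp: spanE' deg_def dest: gi2 intro: vdeg[of "gi _", simplified gi2] , metis gi2 vdeg)
    moreover have "{a\<in>E. deg a = q} \<subseteq> v ` {k\<in>Pairs. d (fst k) + snd k = q}"
      using gi2 by (force simp: deg_def)
    ultimately show ?thesis using mF.span_mono by blast
  qed
  have hi_hom: "module_hom sc scF \<iota>" and hi_act: "\<And>s x. 0 \<le> s \<Longrightarrow> \<iota> (act s x) = actF s (\<iota> x)"
    and hi_deg: "\<And>a. \<iota> ` M a \<subseteq> Fc a"
    using hi by (simp_all add: graded_hom_def)
  have hp_hom: "module_hom scF sc \<pi>" and hp_act: "\<And>s x. 0 \<le> s \<Longrightarrow> \<pi> (actF s x) = act s (\<pi> x)"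
    and hp_deg: "\<And>a. \<pi> ` Fc a \<subseteq> M a"
    using hp by (simp_all add: graded_hom_def)
  define W where "W p = mF.span (v ` {k\<in>Pairs. d (fst k) < p})" for p
  have L2: "\<iota> (\<pi> (v k)) \<in> W (d (fst k))" if "k \<in> Pairs" "d (fst k) \<le> i" for k
  proof -
    obtain b s where k: "k = (b, s)" "b \<in> B" "0 \<le> s" using \<open>k \<in> Pairs\<close> by (auto simp: Pairs_def)
    define p where "p = d b"
    have pi_le: "p \<le> i" using that k by (simp add: p_def)
    have eq: "\<iota> (\<pi> (v k)) = actF s (\<iota> (\<pi> b))"
      using k by (simp add: v_def hp_act hi_act)
    have pib: "\<pi> b \<in> decomposable_part sc act M p"
      using MD[OF pi_le] hp_deg[of p] Bd k(2) by (auto simp: p_def)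
    have hom: "module_hom sc scF (actF s \<circ> \<iota>)"
      by (rule module_hom_compose[OF hi_hom actF_hom[OF k(3)]])
    have subZ: "mM.subspace ((actF s \<circ> \<iota>) -` W p)"
      by (rule module_hom.subspace_vimage[OF hom]) (simp add: W_def)
    have "decomposable_part sc act M p \<subseteq> (actF s \<circ> \<iota>) -` W p"
      unfolding decomposable_part_def
    proof (rule mM.span_minimal[OF _ subZ], safe)
      fix q y assume qp: "q < p" and yM: "y \<in> M q"
      have pq: "0 \<le> p - q" using qp by simp
      define u where "u = s + (p - q)"
      have u0: "0 \<le> u" using pq k(3) by (simp add: u_def)
      have equ: "actF s (\<iota> (act (p - q) y)) = actF u (\<iota> y)"
        using pq k(3) by (simp add: hi_act actF_act u_def)
      have "\<iota> y \<in> Fc q" using hi_deg yM by auto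
      hence "\<iota> y \<in> mF.span (v ` {k\<in>Pairs. d (fst k) + snd k = q})" by (rule L1)
      hence "actF u (\<iota> y) \<in> actF u ` mF.span (v ` {k\<in>Pairs. d (fst k) + snd k = q})" by blast
      also have "\<dots> = mF.span (actF u ` v ` {k\<in>Pairs. d (fst k) + snd k = q})"
        by (rule module_hom.span_image[OF actF_hom[OF u0], symmetric])
      also have "\<dots> \<subseteq> W p"
        unfolding W_def
      proof (rule mF.span_mono, rule subsetI)
        fix z assume "z \<in> actF u ` v ` {k\<in>Pairs. d (fst k) + snd k = q}"
        then obtain b' s' where "(b', s') \<in> Pairs" and dq: "d b' + s' = q" and z: "z = actF u (v (b', s'))"
          by auto
        hence b': "b' \<in> B" "0 \<le> s'" by (auto simp: Pairs_def)
        have "z = v (b', u + s')" using u0 b' z by (simp add: v_def actF_act)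
        moreover have "(b', u + s') \<in> {k\<in>Pairs. d (fst k) < p}"
        proof -
          have "d b' \<le> q" using dq b' by (simp add: add_increasing2 flip: dq)
          hence "d b' < p" using qp by (rule le_less_trans)
          thus ?thesis using b' u0 by (simp add: Pairs_def)
        qed
        ultimately show "z \<in> v ` {k\<in>Pairs. d (fst k) < p}" by blast
      qed
      finally show "act (p - q) y \<in> (actF s \<circ> \<iota>) -` W p" using equ by simp
    qed
    with pib have "actF s (\<iota> (\<pi> b)) \<in> W p" by auto
    thus ?thesis using eq k by (simp add: p_def)
  qed
  obtain x where xM: "x \<in> M i" and x0: "x \<noteq> 0"
    using assms(5) mM.subspace_0[OF subM[of i]] by blast
  define y where "y = \<iota> x"
  have yF: "y \<in> Fc i" using hi_deg xM by (auto simp: y_def)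
  have piy: "\<pi> y = x" using pi by (simp add: y_def)
  have y0: "y \<noteq> 0" using x0 piy module_hom.zero[OF hp_hom] by auto
  define K where "K = {k\<in>Pairs. d (fst k) + snd k = i}"
  have yK: "y \<in> mF.span (v ` K)" unfolding K_def by (rule L1[OF yF])
  have KE: "v ` K \<subseteq> E" by (auto simp: K_def E_def)
  have indK: "mF.independent (v ` K)" by (rule mF.independent_mono[OF indE KE])
  define r where "r = mF.representation (v ` K) y"
  define S where "S = {e. r e \<noteq> 0}"
  have finS: "finite S" unfolding S_def r_def by (rule mF.finite_representation)
  have SK: "S \<subseteq> v ` K" unfolding S_def r_def using mF.representation_ne_zero by blast
  have ysum: "(\<Sum>e\<in>S. scF (r e) e) = y"
    unfolding S_def r_def by (rule mF.sum_nonzero_representation_eq[OF indK yK])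
  have Sne: "S \<noteq> {}" using ysum y0 by auto
  define \<delta> where "\<delta> e = d (fst (gi e))" for e
  have SP: "gi e \<in> K" "v (gi e) = e" if eS0: "e \<in> S" for e
  proof -
    obtain k where "k \<in> K" "e = v k" using SK eS0 by blast
    moreover have "k \<in> Pairs" using \<open>k \<in> K\<close> by (simp add: K_def)
    ultimately show "gi e \<in> K" "v (gi e) = e" using gi1 by auto
  qed
  have Sle: "\<delta> e \<le> i" if "e \<in> S" for e
  proof -
    obtain b s where "gi e = (b, s)" by force
    with SP(1)[OF that] have "b \<in> B" "0 \<le> s" "d b + s = i" by (auto simp: K_def Pairs_def)
    hence "d b \<le> i" by (metis add_increasing2 order_refl)
    thus ?thesis by (simp add: \<delta>_def \<open>gi e = (b, s)\<close>)
  qed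
  obtain p0 where p0: "p0 \<in> \<delta> ` S" and p0max: "\<forall>b\<in>\<delta> ` S. p0 \<le> b \<longrightarrow> p0 = b"
    using finite_has_maximal[of "\<delta> ` S"] finS Sne by blast
  obtain e0 where e0S: "e0 \<in> S" and e0p: "\<delta> e0 = p0" using p0 by blast
  define Q where "Q = {k\<in>Pairs. \<exists>e\<in>S. d (fst k) < \<delta> e}"
  have QE: "v ` Q \<subseteq> E" by (auto simp: Q_def E_def)
  have indQ: "mF.independent (v ` Q)" by (rule mF.independent_mono[OF indE QE])
  have comp_hom: "module_hom scF scF (\<iota> \<circ> \<pi>)"
    by (rule module_hom_compose[OF hp_hom hi_hom])
  have "y = \<iota> (\<pi> y)" using piy by (simp add: y_def)
  also have "\<dots> = (\<Sum>e\<in>S. scF (r e) (\<iota> (\<pi> e)))"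
    using module_hom.sum[OF comp_hom, of "\<lambda>e. scF (r e) e" S] module_hom.scale[OF comp_hom]
    by (simp add: ysum)
  also have "\<dots> \<in> mF.span (v ` Q)"
  proof (rule mF.span_sum, rule mF.span_scale)
    fix e assume eS: "e \<in> S"
    have "gi e \<in> Pairs" using SP(1)[OF eS] by (simp add: K_def)
    from L2[OF this] have "\<iota> (\<pi> (v (gi e))) \<in> W (d (fst (gi e)))" using Sle[OF eS] by (simp add: \<delta>_def)
    hence "\<iota> (\<pi> e) \<in> W (\<delta> e)" using SP(2)[OF eS] by (simp add: \<delta>_def)
    moreover have "W (\<delta> e) \<subseteq> mF.span (v ` Q)"
      unfolding W_def Q_def by (rule mF.span_mono) (use eS in auto)
    ultimately show "\<iota> (\<pi> e) \<in> mF.span (v ` Q)" by blast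
  qed
  finally have yQ: "y \<in> mF.span (v ` Q)" .
  have yE: "y \<in> mF.span E" using spanE' by simp
  have "mF.representation E y = r"
    unfolding r_def
    by (rule mF.representation_eqI[OF indE yE])
       (use KE mF.representation_ne_zero mF.finite_representation
            mF.sum_nonzero_representation_eq[OF indK yK] in auto)
  moreover have "mF.representation E y = mF.representation (v ` Q) y"
    by (rule mF.representation_eqI[OF indE yE])
       (use QE mF.representation_ne_zero mF.finite_representation
            mF.sum_nonzero_representation_eq[OF indQ yQ] in auto)
  ultimately have "mF.representation (v ` Q) y e0 \<noteq> 0" using e0S by (simp add: S_def)
  hence "e0 \<in> v ` Q" by (rule mF.representation_ne_zero)
  then obtain k where kQ: "k \<in> Q" and e0k: "e0 = v k" by blast
  then obtain e where eS: "e \<in> S" and lt: "d (fst k) < \<delta> e" and kP: "k \<in> Pairs" by (auto simp: Q_def)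
  have "\<delta> e0 = d (fst k)" using gi1[OF kP] e0k by (simp add: \<delta>_def)
  hence "p0 < \<delta> e" using lt e0p by simp
  moreover have "\<delta> e \<in> \<delta> ` S" using eS by blast
  ultimately show False using p0max by force
qed

end
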